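(* Let $0<\alpha<1$, $0\le\rho<1-(1+\alpha)^{-1/2}$, $\gamma=(1+\alpha)(1-\rho)^2-1$, $\sigma=(1-\rho)(2-\rho)^{-1}$, and let $\ell$ be a positive integer with $\ell\ge 4\gamma^{-1}$. Let $\mathcal{C}\subseteq[q]^n$ be a code and $S\subseteq[n]$ with $|S|=m$. If $\mathcal{C}_S$ is not $(\rho,\ell,\ell(1+\alpha))$-list recoverable, then there is a set $\mathcal{C}'\subseteq\mathcal{C}_S$ with $|\mathcal{C}'|\le 10\sqrt{\ell/\gamma}$ and $|T_S(\mathcal{C}')|\ge\sigma m/4$.
   Context: For $S\subseteq[n]$, $\mathcal{C}_S\subseteq[q]^S$ denotes the puncturing of $\mathcal{C}$ to $S$ (restriction of each codeword to coordinates in $S$). A code $\mathcal{D}\subseteq[q]^S$ is $(\rho,\ell,L)$-list recoverable if for all sets $A_i\subseteq[q]$ ($i\in S$) with $|A_i|\le\ell$, at most $L$ codewords $c\in\mathcal{D}$ differ from $\prod_{i\in S}A_i$ in at most $\rho|S|$ coordinates (i.e. have $c[i]\notin A_i$ for at most $\rho|S|$ indices $i\in S$). For $\mathcal{C}'\subseteq\mathcal{C}_S$, $T_S(\mathcal{C}')$ is the set of coordinates $i\in S$ for which there exist two distinct $c_1,c_2\in\mathcal{C}'$ with $c_1[i]=c_2[i]$. *)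

theory Defs
  imports "HOL-Library.FuncSet" Complex_Main
begin

text \<open>Words of length n over [q] are extensional functions in
  PiE {..<n} (\<lambda>_. {..<q}); so [n] = {0..<n}, [q] = {0..<q}.\<close>

definition code :: "nat \<Rightarrow> nat \<Rightarrow> (nat \<Rightarrow> nat) set \<Rightarrow> bool" where
  "code q n C \<longleftrightarrow> C \<subseteq> PiE {..<n} (\<lambda>_. {..<q})"

definition puncture :: "(nat \<Rightarrow> nat) set \<Rightarrow> nat set \<Rightarrow> (nat \<Rightarrow> nat) set" where
  "puncture C S = (\<lambda>c. restrict c S) ` C"

definition list_recoverable ::
  "nat \<Rightarrow> nat set \<Rightarrow> (nat \<Rightarrow> nat) set \<Rightarrow> real \<Rightarrow> nat \<Rightarrow> real \<Rightarrow> bool" where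
  "list_recoverable q S D \<rho> l L \<longleftrightarrow>
     (\<forall>A :: nat \<Rightarrow> nat set. (\<forall>i\<in>S. A i \<subseteq> {..<q} \<and> card (A i) \<le> l) \<longrightarrow>
        real (card {c \<in> D. real (card {i \<in> S. c i \<notin> A i}) \<le> \<rho> * real (card S)}) \<le> L)"

definition T_set :: "nat set \<Rightarrow> (nat \<Rightarrow> nat) set \<Rightarrow> nat set" where
  "T_set S C' = {i \<in> S. \<exists>c1\<in>C'. \<exists>c2\<in>C'. c1 \<noteq> c2 \<and> c1 i = c2 i}"

end

theory Submission
  imports Defs
begin
definition good_matching :: "('a \<Rightarrow> 'b) \<Rightarrow> 'a set \<Rightarrow> 'a set set \<Rightarrow> bool" where
  "good_matching h D M \<longleftrightarrow> (\<forall>e\<in>M. e \<subseteq> D \<and> card e = 2 \<and> (\<forall>x\<in>e. \<forall>y\<in>e. h x = h y))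
      \<and> (\<forall>e\<in>M. \<forall>e'\<in>M. e \<noteq> e' \<longrightarrow> e \<inter> e' = {}) \<and> finite M"

lemma matching_exists:
  fixes h :: "'a \<Rightarrow> 'b"
  shows "finite D \<Longrightarrow> finite B \<Longrightarrow> h ` D \<subseteq> B \<Longrightarrow>
   \<exists>M. good_matching h D M \<and> card D \<le> 2 * card M + card B"
proof (induction "card D" arbitrary: D rule: less_induct)
  case less
  show ?case
  proof (cases "inj_on h D")
    case True
    then have "card D = card (h ` D)" by (simp add: card_image)
    also have "\<dots> \<le> card B" using less.prems by (simp add: card_mono)
    finally have "card D \<le> 2 * card ({}::'a set set) + card B" by simp
    moreover have "good_matching h D {}" unfolding good_matching_def by simp
    ultimately show ?thesis by blast
  next
    case False
    then obtain x y where xy: "x \<in> D" "y \<in> D" "x \<noteq> y" "h x = h y"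
      unfolding inj_on_def by auto
    define D' where "D' = D - {x, y}"
    have "card {x,y} \<le> card D" using xy less.prems(1) by (intro card_mono) auto
    then have "card D \<ge> 2" using xy by simp
    then have cD: "card D = card D' + 2" using xy less.prems(1) unfolding D'_def
      by (simp add: card_Diff_subset)
    have lt: "card D' < card D" using cD by simp
    have fin: "finite D'" using less.prems(1) unfolding D'_def by simp
    have img: "h ` D' \<subseteq> B" using less.prems(3) unfolding D'_def by auto
    obtain M' where gM: "good_matching h D' M'" and cM: "card D' \<le> 2 * card M' + card B"
      using less.hyps[OF lt fin less.prems(2) img] by blast
    have M123: "(\<forall>e\<in>M'. e \<subseteq> D' \<and> card e = 2 \<and> (\<forall>x\<in>e. \<forall>y\<in>e. h x = h y))
      \<and> (\<forall>e\<in>M'. \<forall>e'\<in>M'. e \<noteq> e' \<longrightarrow> e \<inter> e' = {}) \<and> finite M'"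
      using gM unfolding good_matching_def .
    note M1 = conjunct1[OF M123]
    note M2 = conjunct1[OF conjunct2[OF M123]]
    note M3 = conjunct2[OF conjunct2[OF M123]]
    have dj: "\<forall>e\<in>M'. e \<inter> {x,y} = {}" using M1 unfolding D'_def by blast
    have nin: "{x,y} \<notin> M'" using dj by auto
    have "good_matching h D (insert {x,y} M')"
      unfolding good_matching_def
    proof (intro conjI)
      show "\<forall>e\<in>insert {x, y} M'. e \<subseteq> D \<and> card e = 2 \<and> (\<forall>x\<in>e. \<forall>y\<in>e. h x = h y)"
      proof
        fix e assume "e \<in> insert {x, y} M'"
        then show "e \<subseteq> D \<and> card e = 2 \<and> (\<forall>x\<in>e. \<forall>y\<in>e. h x = h y)"
        proof
          assume "e = {x,y}" then show ?thesis using xy by auto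
        next
          assume "e \<in> M'" then show ?thesis using M1 unfolding D'_def by blast
        qed
      qed
      show "\<forall>e\<in>insert {x, y} M'. \<forall>e'\<in>insert {x, y} M'. e \<noteq> e' \<longrightarrow> e \<inter> e' = {}"
        using M2 dj by (auto simp: Int_commute)
      show "finite (insert {x, y} M')" using M3 by simp
    qed
    moreover have "card D \<le> 2 * card (insert {x, y} M') + card B"
      using M3 nin cD cM by simp
    ultimately show ?thesis by blast
  qed
qed

lemma bonf:
  fixes A :: "'i \<Rightarrow> 'x set"
  assumes "finite J" "\<forall>j\<in>J. finite (A j)" "\<forall>j\<in>J. a \<le> real (card (A j))"
    "\<forall>j\<in>J. \<forall>j'\<in>J. j \<noteq> j' \<longrightarrow> real (card (A j \<inter> A j')) \<le> b"
  shows "real (card (\<Union>j\<in>J. A j)) \<ge> real (card J) * a - real (card J) * (real (card J) - 1) / 2 * b"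
  using assms
proof (induction J rule: finite_induct)
  case empty
  then show ?case by simp
next
  case (insert x F)
  let ?U = "\<Union>j\<in>F. A j"
  have fU: "finite ?U" using insert.hyps(1) insert.prems(1) by blast
  have IH: "real (card ?U) \<ge> real (card F) * a - real (card F) * (real (card F) - 1) / 2 * b"
    using insert.IH insert.prems by blast
  have "card (A x \<inter> ?U) = card (\<Union>j\<in>F. A x \<inter> A j)" by (simp only: Int_UN_distrib)
  also have "\<dots> \<le> (\<Sum>j\<in>F. card (A x \<inter> A j))" using insert.hyps(1) by (rule card_UN_le)
  finally have "real (card (A x \<inter> ?U)) \<le> real (\<Sum>j\<in>F. card (A x \<inter> A j))" by (simp only: of_nat_le_iff)
  also have "\<dots> = (\<Sum>j\<in>F. real (card (A x \<inter> A j)))" by (simp only: of_nat_sum)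
  also have "\<dots> \<le> (\<Sum>j\<in>F. b)"
  proof (rule sum_mono)
    fix j assume "j \<in> F"
    then show "real (card (A x \<inter> A j)) \<le> b" using insert.prems(3) insert.hyps(2) by auto
  qed
  finally have I: "real (card (A x \<inter> ?U)) \<le> real (card F) * b" by simp
  have fA: "finite (A x)" using insert.prems(1) by simp
  have "card (A x) + card ?U = card (A x \<union> ?U) + card (A x \<inter> ?U)"
    using fA fU by (rule card_Un_Int)
  moreover have "(\<Union>j\<in>insert x F. A j) = A x \<union> ?U" by simp
  ultimately have E: "real (card (\<Union>j\<in>insert x F. A j)) = real (card (A x)) + real (card ?U) - real (card (A x \<inter> ?U))"
    by (metis add_diff_cancel_right' of_nat_add)
  have ax: "a \<le> real (card (A x))" using insert.prems(2) by simp
  have cI: "real (card (insert x F)) = real (card F) + 1" using insert.hyps by simp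
  have alg: "(real (card F) + 1) * a - (real (card F) + 1) * (real (card F) + 1 - 1) / 2 * b
     = (real (card F) * a - real (card F) * (real (card F) - 1) / 2 * b) + a - real (card F) * b"
    by (simp add: algebra_simps add_divide_distrib diff_divide_distrib)
  show ?case unfolding E cI alg using IH I ax by linarith
qed

lemma count_sup:
  assumes "finite D" "F \<subseteq> D" "card F \<le> k"
  shows "card {X. X \<subseteq> D \<and> card X = k \<and> F \<subseteq> X} = (card D - card F) choose (k - card F)"
proof -
  have fF: "finite F" using assms finite_subset by auto
  have "bij_betw (\<lambda>X. X - F) {X. X \<subseteq> D \<and> card X = k \<and> F \<subseteq> X} {Y. Y \<subseteq> D - F \<and> card Y = k - card F}"
  proof (rule bij_betw_byWitness[where f' = "\<lambda>Y. Y \<union> F"])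
    show "\<forall>a\<in>{X. X \<subseteq> D \<and> card X = k \<and> F \<subseteq> X}. a - F \<union> F = a" by auto
    show "\<forall>a'\<in>{Y. Y \<subseteq> D - F \<and> card Y = k - card F}. a' \<union> F - F = a'" by auto
    show "(\<lambda>X. X - F) ` {X. X \<subseteq> D \<and> card X = k \<and> F \<subseteq> X} \<subseteq> {Y. Y \<subseteq> D - F \<and> card Y = k - card F}"
      using fF by (auto simp: card_Diff_subset)
    show "(\<lambda>Y. Y \<union> F) ` {Y. Y \<subseteq> D - F \<and> card Y = k - card F} \<subseteq> {X. X \<subseteq> D \<and> card X = k \<and> F \<subseteq> X}"
    proof
      fix X assume "X \<in> (\<lambda>Y. Y \<union> F) ` {Y. Y \<subseteq> D - F \<and> card Y = k - card F}"
      then obtain Y where Y: "Y \<subseteq> D - F" "card Y = k - card F" "X = Y \<union> F" by auto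
      have "finite Y" using Y assms finite_subset by blast
      then have "card X = card Y + card F" using Y fF card_Un_disjoint[of Y F] by auto
      then have "card X = k" using Y assms by simp
      then show "X \<in> {X. X \<subseteq> D \<and> card X = k \<and> F \<subseteq> X}" using Y assms by auto
    qed
  qed
  then have "card {X. X \<subseteq> D \<and> card X = k \<and> F \<subseteq> X} = card {Y. Y \<subseteq> D - F \<and> card Y = k - card F}"
    by (rule bij_betw_same_card)
  also have "\<dots> = card (D - F) choose (k - card F)" using assms by (simp add: n_subsets)
  finally show ?thesis using assms fF by (simp add: card_Diff_subset)
qed




lemma card_filter_sum: "finite A \<Longrightarrow> card {x\<in>A. P x} = (\<Sum>x\<in>A. if P x then 1 else 0)"
  by (simp add: sum.If_cases Collect_conj_eq)

lemma count_swap: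
  assumes "finite A" "finite B"
  shows "(\<Sum>x\<in>A. card {y\<in>B. P x y}) = (\<Sum>y\<in>B. card {x\<in>A. P x y})"
proof -
  have "(\<Sum>x\<in>A. card {y\<in>B. P x y}) = (\<Sum>x\<in>A. \<Sum>y\<in>B. if P x y then 1 else 0)"
    using assms by (simp add: card_filter_sum)
  also have "\<dots> = (\<Sum>y\<in>B. \<Sum>x\<in>A. if P x y then 1 else 0)" by (rule sum.swap)
  also have "\<dots> = (\<Sum>y\<in>B. card {x\<in>A. P x y})"
    using assms by (simp add: card_filter_sum)
  finally show ?thesis .
qed

lemma two_step:
  assumes "2 \<le> k" "k \<le> n"
  shows "((n-2) choose (k-2)) * (n*(n-1)) = (n choose k) * (k*(k-1))"
proof -
  have a: "k * (n choose k) = n * ((n - 1) choose (k - 1))"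
    using assms by (intro times_binomial_minus1_eq) auto
  have b: "(k-1) * ((n-1) choose (k-1)) = (n-1) * ((n - 1 - 1) choose (k - 1 - 1))"
    using assms by (intro times_binomial_minus1_eq) auto
  have "(n choose k) * (k*(k-1)) = (k-1) * (k * (n choose k))" by (simp add: algebra_simps)
  also have "\<dots> = n * ((k-1) * ((n - 1) choose (k - 1)))" unfolding a by (simp add: algebra_simps)
  also have "\<dots> = n * ((n-1) * ((n - 1 - 1) choose (k - 1 - 1)))" unfolding b ..
  also have "\<dots> = ((n-2) choose (k-2)) * (n*(n-1))" by (simp add: algebra_simps numeral_2_eq_2)
  finally show ?thesis by simp
qed

lemma powr_half_sq:
  fixes a :: real assumes "0 < a"
  shows "(a powr (-1/2))^2 = 1 / a"
proof -
  have p: "0 < a powr (-1/2)" using assms by simp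
  have "(a powr (-1/2))^2 = (a powr (-1/2)) powr (real 2)" using powr_realpow[OF p] by simp
  also have "\<dots> = a powr (-1)" by (simp add: powr_powr)
  also have "\<dots> = 1 / a" using assms by (simp add: powr_minus divide_inverse)
  finally show ?thesis .
qed



lemma gm_edge:
  assumes "good_matching h D M" "e \<in> M"
  shows "e \<subseteq> D \<and> card e = 2 \<and> (\<forall>x\<in>e. \<forall>y\<in>e. h x = h y)"
proof -
  have "\<forall>e\<in>M. e \<subseteq> D \<and> card e = 2 \<and> (\<forall>x\<in>e. \<forall>y\<in>e. h x = h y)"
    using assms(1) unfolding good_matching_def by (rule conjunct1)
  then show ?thesis using assms(2) by (rule bspec)
qed

lemma gm_disj:
  assumes "good_matching h D M" "e \<in> M" "e' \<in> M" "e \<noteq> e'"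
  shows "e \<inter> e' = {}"
proof -
  have "\<forall>e\<in>M. \<forall>e'\<in>M. e \<noteq> e' \<longrightarrow> e \<inter> e' = {}"
    using assms(1) unfolding good_matching_def by (rule conjunct1[OF conjunct2])
  then have "e \<noteq> e' \<longrightarrow> e \<inter> e' = {}" using assms(2,3) by simp
  then show ?thesis using assms(4) by simp
qed

lemma gm_finite: assumes "good_matching h D M" shows "finite M"
  using assms unfolding good_matching_def by simp

lemma gm_subset: assumes "good_matching h D M" "M0 \<subseteq> M" shows "good_matching h D M0"
proof -
  have 1: "\<forall>e\<in>M0. e \<subseteq> D \<and> card e = 2 \<and> (\<forall>x\<in>e. \<forall>y\<in>e. h x = h y)"
  proof
    fix e assume "e \<in> M0" then have "e \<in> M" by (rule subsetD[OF assms(2)])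
    then show "e \<subseteq> D \<and> card e = 2 \<and> (\<forall>x\<in>e. \<forall>y\<in>e. h x = h y)"
      by (rule gm_edge[OF assms(1)])
  qed
  have 2: "\<forall>e\<in>M0. \<forall>e'\<in>M0. e \<noteq> e' \<longrightarrow> e \<inter> e' = {}"
  proof (intro ballI impI)
    fix e e' assume a: "e \<in> M0" "e' \<in> M0" "e \<noteq> e'"
    have "e \<in> M" using a(1) by (rule subsetD[OF assms(2)])
    moreover have "e' \<in> M" using a(2) by (rule subsetD[OF assms(2)])
    ultimately
    show "e \<inter> e' = {}" using gm_disj[OF assms(1)] a(3) by blast
  qed
  have 3: "finite M0" using gm_finite[OF assms(1)] assms(2) by (rule finite_subset[rotated])
  show ?thesis unfolding good_matching_def using 1 2 3 by (intro conjI)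
qed

lemma edge_T:
  assumes "i \<in> S" "e \<subseteq> X" "card e = 2" "\<forall>x\<in>e. \<forall>y\<in>e. x i = y i"
  shows "i \<in> T_set S X"
proof -
  have "\<exists>c c'. e = {c, c'} \<and> c \<noteq> c'" using assms(3) by (simp only: card_2_iff)
  then obtain c c' where cc: "e = {c, c'}" "c \<noteq> c'" by blast
  have X: "c \<in> X" "c' \<in> X" using assms(2) unfolding cc(1) by simp_all
  have "c \<in> e" "c' \<in> e" unfolding cc(1) by simp_all
  then have "c i = c' i" using assms(4) by blast
  then have "\<exists>c1\<in>X. \<exists>c2\<in>X. c1 \<noteq> c2 \<and> c1 i = c2 i" using X cc(2) by blast
  then show ?thesis unfolding T_set_def using assms(1) by simp
qed



theorem mainTheorem3:
  fixes \<alpha> \<rho> \<gamma> \<sigma> :: real and l q n m :: nat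
    and C :: "(nat \<Rightarrow> nat) set" and S :: "nat set"
  assumes "0 < \<alpha>" "\<alpha> < 1"
    and "0 \<le> \<rho>" "\<rho> < 1 - (1 + \<alpha>) powr (-1/2)"
    and "\<gamma> = (1 + \<alpha>) * (1 - \<rho>)^2 - 1"
    and "\<sigma> = (1 - \<rho>) / (2 - \<rho>)"
    and "0 < l" "real l \<ge> 4 / \<gamma>"
    and "code q n C"
    and "S \<subseteq> {..<n}" "card S = m"
    and "\<not> list_recoverable q S (puncture C S) \<rho> l (real l * (1 + \<alpha>))"
  shows "\<exists>C' \<subseteq> puncture C S. real (card C') \<le> 10 * sqrt (real l / \<gamma>)
           \<and> real (card (T_set S C')) \<ge> \<sigma> * real m / 4"
proof -
  have finS: "finite S" using assms(10) finite_subset by blast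
  obtain A where hA: "\<forall>i\<in>S. A i \<subseteq> {..<q} \<and> card (A i) \<le> l"
    and big: "\<not> real (card {c \<in> puncture C S. real (card {i \<in> S. c i \<notin> A i}) \<le> \<rho> * real (card S)}) \<le> real l * (1 + \<alpha>)"
    using assms(12) unfolding list_recoverable_def by blast
  define Lst where "Lst = {c \<in> puncture C S. real (card {i \<in> S. c i \<notin> A i}) \<le> \<rho> * real (card S)}"
  have bigL: "real (card Lst) > real l * (1 + \<alpha>)" using big unfolding Lst_def by linarith
  have lpos: "real l * (1 + \<alpha>) > 0" using assms(1,7) by simp
  have "card Lst > 0" using bigL lpos by linarith
  then have finL: "finite Lst" using card_gt_0_iff by blast
  have LP: "Lst \<subseteq> puncture C S" unfolding Lst_def by blast
  define N where "N = min (card Lst) (2*l)"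
  have l2: "real (2*l) > real l * (1 + \<alpha>)" using assms(2,7) by simp
  have N1: "real N > real l * (1 + \<alpha>)"
  proof (cases "card Lst \<le> 2*l")
    case True then have "N = card Lst" unfolding N_def by simp
    then show ?thesis using bigL by simp
  next
    case False then have "N = 2*l" unfolding N_def by simp
    then show ?thesis using l2 by simp
  qed
  have N2: "N \<le> 2*l" "N \<le> card Lst" unfolding N_def by simp_all
  obtain D0 where D0: "D0 \<subseteq> Lst" "card D0 = N" "finite D0"
    using obtain_subset_with_card_n[OF N2(2)] by blast
  have Npos: "real N > 0" using N1 lpos by linarith
  have Nl: "real N \<le> 2 * real l" using N2(1) by simp

  define w where "w = (1 + \<alpha>) powr (-1/2)"
  have w0: "w > 0" unfolding w_def using assms(1) by simp
  have w2: "w^2 = 1 / (1 + \<alpha>)" unfolding w_def using assms(1) by (intro powr_half_sq) simp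
  have r1: "w < 1 - \<rho>" using assms(4) unfolding w_def by linarith
  define x where "x = (1 - \<rho>)^2"
  have xw: "w^2 < x" unfolding x_def using r1 w0 by (intro power_strict_mono) auto
  have xg: "x * (1 + \<alpha>) = 1 + \<gamma>" using assms(5) unfolding x_def by (simp add: algebra_simps)
  have "x * (1 + \<alpha>) > 1"
  proof -
    have "x * (1 + \<alpha>) > w^2 * (1 + \<alpha>)" using xw assms(1) by (intro mult_strict_right_mono) auto
    also have "w^2 * (1 + \<alpha>) = 1" unfolding w2 using assms(1) by simp
    finally show ?thesis by simp
  qed
  then have gpos: "\<gamma> > 0" using xg by simp
  have rho1: "\<rho> < 1" using r1 w0 by simp
  have x0: "x > 0" unfolding x_def using rho1 by simp
  have x1: "x \<le> 1" unfolding x_def using rho1 assms(3) by (simp add: power_le_one)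
  have glt1: "\<gamma> < 1"
  proof -
    have "x * (1 + \<alpha>) \<le> 1 * (1 + \<alpha>)" using x1 assms(1) by (intro mult_right_mono) auto
    then show ?thesis using xg assms(2) by simp
  qed
  have lg: "real l * \<gamma> \<ge> 4" using assms(8) gpos by (simp add: pos_divide_le_eq)
  define u where "u = real l / \<gamma>"
  have u4: "u \<ge> 4"
  proof -
    have lgl: "real l * \<gamma> \<le> real l" using glt1 gpos by (intro mult_left_le) auto
    then have "u \<ge> real l" unfolding u_def pos_le_divide_eq[OF gpos] .
    moreover have "real l \<ge> 4" using lg lgl by linarith
    ultimately show ?thesis by simp
  qed
  define s where "s = sqrt u"
  have s2: "s \<ge> 2" unfolding s_def using u4 real_sqrt_le_mono[of 4 u] by simp
  have ss: "s * s = u" unfolding s_def using u4 by simp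
  define k0 where "k0 = nat \<lceil>2*s\<rceil> + 1"
  have k0a: "real k0 - 1 \<ge> 2*s" unfolding k0_def using s2 by linarith
  have k0b: "real k0 \<le> 2*s + 2" unfolding k0_def using s2 by linarith
  have k0c: "real k0 \<le> 10 * sqrt (real l / \<gamma>)" using k0b s2 unfolding s_def u_def by linarith
  have k0d: "k0 \<ge> 5" using k0a s2 by linarith
  have k0e: "real k0 * (real k0 - 1) \<ge> 4 * u"
  proof -
    have "real k0 * (real k0 - 1) \<ge> (2*s) * (2*s)" using k0a s2 by (intro mult_mono) auto
    then show ?thesis using ss by simp
  qed
  have k0f: "real k0 * (real k0 - 1) * (\<gamma> * real l) \<ge> real N * (real N - 1)"
  proof -
    have "real k0 * (real k0 - 1) * (\<gamma> * real l) \<ge> 4 * u * (\<gamma> * real l)"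
      using k0e gpos by (intro mult_right_mono) auto
    also have "4 * u * (\<gamma> * real l) = 4 * real l * real l" unfolding u_def using gpos by simp
    finally have "real k0 * (real k0 - 1) * (\<gamma> * real l) \<ge> 4 * real l * real l" .
    moreover have "real N * (real N - 1) \<le> (2 * real l) * (2 * real l)" using Nl Npos
      by (intro mult_mono) auto
    ultimately show ?thesis by linarith
  qed

  have DP: "D0 \<subseteq> puncture C S" using D0(1) LP by blast
  have agr: "real (card {i\<in>S. c i \<in> A i}) \<ge> (1 - \<rho>) * real m" if c: "c \<in> D0" for c
  proof -
    have cL: "c \<in> Lst" using c D0(1) by blast
    then have dis: "real (card {i \<in> S. c i \<notin> A i}) \<le> \<rho> * real m"
      unfolding Lst_def using assms(11) by simp
    have "S = {i\<in>S. c i \<in> A i} \<union> {i \<in> S. c i \<notin> A i}" by blast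
    moreover have "{i\<in>S. c i \<in> A i} \<inter> {i \<in> S. c i \<notin> A i} = {}" by blast
    ultimately have "card S = card {i\<in>S. c i \<in> A i} + card {i \<in> S. c i \<notin> A i}"
      using finS by (metis (no_types, lifting) card_Un_disjoint finite_Un)
    then have "real m = real (card {i\<in>S. c i \<in> A i}) + real (card {i \<in> S. c i \<notin> A i})"
      using assms(11) by simp
    then show ?thesis using dis by (simp add: algebra_simps)
  qed
  define t where "t i = card {c\<in>D0. c i \<in> A i}" for i
  have dc: "(\<Sum>c\<in>D0. card {i\<in>S. c i \<in> A i}) = (\<Sum>i\<in>S. t i)"
    unfolding t_def by (rule count_swap[OF D0(3) finS])
  have sumlow: "(\<Sum>i\<in>S. real (t i)) \<ge> real N * ((1 - \<rho>) * real m)"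
  proof -
    have "(\<Sum>i\<in>S. real (t i)) = (\<Sum>c\<in>D0. real (card {i\<in>S. c i \<in> A i}))"
    proof -
      have "(\<Sum>i\<in>S. real (t i)) = real (\<Sum>i\<in>S. t i)" by (simp only: of_nat_sum)
      also have "\<dots> = real (\<Sum>c\<in>D0. card {i\<in>S. c i \<in> A i})" by (simp only: dc)
      also have "\<dots> = (\<Sum>c\<in>D0. real (card {i\<in>S. c i \<in> A i}))" by (simp only: of_nat_sum)
      finally show ?thesis .
    qed
    also have "\<dots> \<ge> (\<Sum>c\<in>D0. (1 - \<rho>) * real m)" using agr by (intro sum_mono) auto
    finally show ?thesis using D0(2) by simp
  qed
  have tle: "t i \<le> N" for i
  proof -
    have "{c\<in>D0. c i \<in> A i} \<subseteq> D0" by blast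
    then have "card {c\<in>D0. c i \<in> A i} \<le> card D0" by (rule card_mono[OF D0(3)])
    then show ?thesis unfolding t_def D0(2) .
  qed
  define G where "G = {i\<in>S. real (t i) \<ge> x * real N}"
  have GS: "G \<subseteq> S" unfolding G_def by blast
  have finG: "finite G" using finS GS finite_subset by blast
  have rp2: "2 - \<rho> > 0" using rho1 by linarith
  have sa: "(1 - \<rho>) / (2 - \<rho>) \<le> 1"
    apply (subst divide_le_eq_1_pos[OF rp2]) by linarith
  have sb: "(1 - \<rho>) / (2 - \<rho>) \<ge> 0" using rho1 rp2 by (intro divide_nonneg_pos) auto
  have sig1: "\<sigma> \<le> 1" "\<sigma> \<ge> 0" unfolding assms(6) using sa sb by simp_all
  have Gbig: "real (card G) \<ge> \<sigma> * real m"
  proof (cases "G = S")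
    case True then have "real (card G) = real m" using assms(11) by simp
    then show ?thesis using sig1 by (simp add: mult_left_le_one_le)
  next
    case False
    have SG: "S - G \<noteq> {}" using False GS by blast
    have "(\<Sum>i\<in>S. real (t i)) = (\<Sum>i\<in>S - G. real (t i)) + (\<Sum>i\<in>G. real (t i))"
      using GS finS by (rule sum.subset_diff)
    moreover have "(\<Sum>i\<in>G. real (t i)) \<le> (\<Sum>i\<in>G. real N)" using tle by (intro sum_mono) simp
    moreover have "(\<Sum>i\<in>S - G. real (t i)) < (\<Sum>i\<in>S - G. x * real N)"
    proof (rule sum_strict_mono)
      show "finite (S - G)" using finS by simp
      show "S - G \<noteq> {}" using SG .
      fix i assume "i \<in> S - G" then show "real (t i) < x * real N" unfolding G_def by auto
    qed
    ultimately have "real N * ((1 - \<rho>) * real m) < real (card (S - G)) * (x * real N) + real (card G) * real N"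
      using sumlow by simp
    moreover have "real (card (S - G)) = real m - real (card G)"
    proof -
      have cGm: "card G \<le> m" using card_mono[OF finS GS] assms(11) by simp
      have "card (S - G) = m - card G" using card_Diff_subset[OF finG GS] assms(11) by simp
      then show ?thesis using cGm by simp
    qed
    ultimately have "real N * ((1 - \<rho>) * real m) < real N * ((real m - real (card G)) * x + real (card G))"
      by (simp add: algebra_simps)
    then have ineq: "(1 - \<rho>) * real m < (real m - real (card G)) * x + real (card G)"
      using Npos by simp
    have "\<rho> * ((1 - \<rho>) * real m) < \<rho> * ((2 - \<rho>) * real (card G))"
      using ineq unfolding x_def by (simp add: algebra_simps power2_eq_square)
    then have rp: "\<rho> > 0" using assms(3) by (cases "\<rho> = 0") auto
    then have "(1 - \<rho>) * real m < (2 - \<rho>) * real (card G)"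
      using \<open>\<rho> * ((1 - \<rho>) * real m) < \<rho> * ((2 - \<rho>) * real (card G))\<close> by simp
    then show ?thesis unfolding assms(6) using rho1 by (simp add: field_simps)
  qed

  have match: "\<exists>M. good_matching (\<lambda>c. c i) {c\<in>D0. c i \<in> A i} M \<and> real (card M) > \<gamma> * real l / 2"
    if iG: "i \<in> G" for i
  proof -
    have iS: "i \<in> S" using iG GS by blast
    have Ai: "A i \<subseteq> {..<q}" "card (A i) \<le> l" using hA iS by auto
    have finA: "finite (A i)" using Ai(1) finite_subset by blast
    have finD': "finite {c\<in>D0. c i \<in> A i}" using D0(3) by simp
    have img: "(\<lambda>c. c i) ` {c\<in>D0. c i \<in> A i} \<subseteq> A i" by blast
    obtain M where gM: "good_matching (\<lambda>c. c i) {c\<in>D0. c i \<in> A i} M"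
      and cM: "card {c\<in>D0. c i \<in> A i} \<le> 2 * card M + card (A i)"
      using matching_exists[OF finD' finA img] by blast
    have "real (t i) \<le> 2 * real (card M) + real l"
      using cM Ai(2) unfolding t_def by linarith
    moreover have "real (t i) \<ge> x * real N" using iG unfolding G_def by blast
    moreover have "x * real N > x * (real l * (1 + \<alpha>))" using N1 x0 by (rule mult_strict_left_mono)
    moreover have "x * (real l * (1 + \<alpha>)) = (1 + \<gamma>) * real l"
    proof -
      have "x * (real l * (1 + \<alpha>)) = (x * (1 + \<alpha>)) * real l" by (simp add: ac_simps)
      then show ?thesis unfolding xg .
    qed
    ultimately have "2 * real (card M) > \<gamma> * real l" by (simp add: algebra_simps)
    then show ?thesis using gM by auto
  qed
  have Tfin: "finite (T_set S X)" for X unfolding T_set_def using finS by simp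
  show ?thesis
  proof (cases "N \<le> k0")
    case True
    have "G \<subseteq> T_set S D0"
    proof
      fix i assume iG: "i \<in> G"
      obtain M where gM: "good_matching (\<lambda>c. c i) {c\<in>D0. c i \<in> A i} M"
        and cM: "real (card M) > \<gamma> * real l / 2" using match[OF iG] by blast
      have "card M \<noteq> 0" using cM lg by (intro notI) (simp add: mult.commute)
      then have "M \<noteq> {}" by (intro notI) simp
      then obtain e where eM: "e \<in> M" by blast
      note ee = gm_edge[OF gM eM]
      have "e \<subseteq> D0" using ee by blast
      moreover have "i \<in> S" using iG GS by blast
      ultimately show "i \<in> T_set S D0" using ee by (intro edge_T[of i S e D0]) auto
    qed
    then have "card G \<le> card (T_set S D0)" using Tfin by (rule card_mono[rotated])
    then have "real (card (T_set S D0)) \<ge> \<sigma> * real m" using Gbig by linarith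
    moreover have "\<sigma> * real m \<ge> 0" using sig1 by simp
    ultimately have c2: "real (card (T_set S D0)) \<ge> \<sigma> * real m / 4" by linarith
    have "real (card D0) \<le> 10 * sqrt (real l / \<gamma>)" using True D0(2) k0c by simp
    then show ?thesis using c2 DP by blast
  next
    case False
    then have kN: "k0 < N" by simp

    define k where "k = k0"
    have k5: "k \<ge> 5" unfolding k_def using k0d .
    have kN2: "k < N" unfolding k_def using kN .
    have kc: "real k \<le> 10 * sqrt (real l / \<gamma>)" unfolding k_def using k0c .
    have kf: "real k * (real k - 1) * (\<gamma> * real l) \<ge> real N * (real N - 1)" unfolding k_def using k0f .
    define KK where "KK = {X. X \<subseteq> D0 \<and> card X = k}"
    have "KK \<subseteq> Pow D0" unfolding KK_def by blast
    then have finKK: "finite KK" by (rule finite_subset) (simp add: D0(3))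
    define CK where "CK = N choose k"
    have cKK: "card KK = CK" unfolding KK_def CK_def using n_subsets[OF D0(3), of k] D0(2) by simp
    have CKpos: "CK > 0" unfolding CK_def using kN2 by simp
    have KKne: "KK \<noteq> {}" using cKK CKpos by (intro notI) simp
    define p where "p = real k * (real k - 1) / (real N * (real N - 1))"
    have kr5: "real k \<ge> 5" using k5 by simp
    have Nr6: "real N \<ge> 6" using k5 kN2 by simp
    have kNr: "real k < real N" using kN2 by simp
    have kkpos: "real k * (real k - 1) > 0" using kr5 by (intro mult_pos_pos) auto
    have NNpos: "real N * (real N - 1) > 0" using Nr6 by (intro mult_pos_pos) auto
    have kkN: "real k * (real k - 1) \<le> real N * (real N - 1)" using kNr kr5 by (intro mult_mono) auto
    have ppos: "p > 0" unfolding p_def using kkpos NNpos by (rule divide_pos_pos)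
    have ple1: "p \<le> 1" unfolding p_def
      apply (subst divide_le_eq_1_pos[OF NNpos]) by (rule kkN)
    have pg: "p * (\<gamma> * real l) \<ge> 1"
    proof -
      have "p * (\<gamma> * real l) = real k * (real k - 1) * (\<gamma> * real l) / (real N * (real N - 1))"
        unfolding p_def by simp
      also have "\<dots> \<ge> 1"
        apply (subst le_divide_eq_1_pos[OF NNpos]) by (rule kf)
      finally show ?thesis .
    qed
    define a0 where "a0 = (N-2) choose (k-2)"
    define b0 where "b0 = (N-4) choose (k-4)"
    have ts1: "a0 * (N*(N-1)) = CK*(k*(k-1))" unfolding a0_def CK_def
      using two_step[of k N] k5 kN2 by simp
    have ts2: "b0 * ((N-2)*(N-2-1)) = a0*((k-2)*(k-2-1))"
    proof -
      have "((N-2-2) choose (k-2-2)) * ((N-2)*(N-2-1)) = ((N-2) choose (k-2))*((k-2)*(k-2-1))"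
        using k5 kN2 by (intro two_step) auto
      moreover have "N-2-2 = N-4" "k-2-2 = k-4" by simp_all
      ultimately show ?thesis unfolding a0_def b0_def by simp
    qed
    have ts1r: "real a0 * (real N * (real N - 1)) = real CK * (real k * (real k - 1))"
    proof -
      have "real (a0 * (N*(N-1))) = real (CK*(k*(k-1)))" using ts1 by (simp only:)
      moreover have "real (N-1) = real N - 1" "real (k-1) = real k - 1" using k5 kN2 by simp_all
      ultimately show ?thesis by (simp only: of_nat_mult)
    qed
    have a0p: "real a0 = p * real CK"
    proof -
      have "p * real CK = real CK * (real k * (real k - 1)) / (real N * (real N - 1))"
        unfolding p_def by simp
      also have "\<dots> = real a0 * (real N * (real N - 1)) / (real N * (real N - 1))"
        by (simp only: ts1r)
      also have "\<dots> = real a0" using NNpos by (intro nonzero_mult_div_cancel_right) linarith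
      finally show ?thesis by simp
    qed
    have ts2r: "real b0 * ((real N - 2) * (real N - 3)) = real a0 * ((real k - 2) * (real k - 3))"
    proof -
      have "real (b0 * ((N-2)*(N-2-1))) = real (a0*((k-2)*(k-2-1)))" using ts2 by (simp only:)
      moreover have "real (N-2) = real N - 2" "real (N-2-1) = real N - 3"
        "real (k-2) = real k - 2" "real (k-2-1) = real k - 3" using k5 kN2 by simp_all
      ultimately show ?thesis by (simp only: of_nat_mult)
    qed
    have qle: "(real k - 2) * (real k - 3) * (real N * (real N - 1)) \<le> real k * (real k - 1) * ((real N - 2) * (real N - 3))"
    proof -
      have e1: "(real k - 2) * real N \<le> real k * (real N - 2)" using kNr by (simp add: algebra_simps)
      have e2: "(real k - 3) * (real N - 1) \<le> (real k - 1) * (real N - 3)" using kNr by (simp add: algebra_simps)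
      have "((real k - 2) * real N) * ((real k - 3) * (real N - 1)) \<le> (real k * (real N - 2)) * ((real k - 1) * (real N - 3))"
      proof -
        have h1: "0 \<le> real k * (real N - 2)" using kr5 Nr6 by (intro mult_nonneg_nonneg) auto
        have h2: "0 \<le> (real k - 3) * (real N - 1)" using kr5 Nr6 by (intro mult_nonneg_nonneg) auto
        show ?thesis by (rule mult_mono[OF e1 e2 h1 h2])
      qed
      moreover have "((real k - 2) * real N) * ((real k - 3) * (real N - 1)) = (real k - 2) * (real k - 3) * (real N * (real N - 1))"
        by (simp add: ac_simps)
      moreover have "(real k * (real N - 2)) * ((real k - 1) * (real N - 3)) = real k * (real k - 1) * ((real N - 2) * (real N - 3))"
        by (simp add: ac_simps)
      ultimately show ?thesis by simp
    qed
    have b0p: "real b0 \<le> p * p * real CK"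
    proof -
      have N23: "(real N - 2) * (real N - 3) > 0" using Nr6 by (intro mult_pos_pos) auto
      have "real b0 = real b0 * ((real N - 2) * (real N - 3)) / ((real N - 2) * (real N - 3))"
        using N23 by (intro nonzero_mult_div_cancel_right[symmetric]) linarith
      also have "\<dots> = real a0 * ((real k - 2) * (real k - 3)) / ((real N - 2) * (real N - 3))"
        by (simp only: ts2r)
      finally have "real b0 = real a0 * ((real k - 2) * (real k - 3)) / ((real N - 2) * (real N - 3))" .
      also have "\<dots> \<le> real a0 * p"
      proof -
        have "(real k - 2) * (real k - 3) * (real N * (real N - 1)) / (((real N - 2) * (real N - 3)) * (real N * (real N - 1)))
           \<le> real k * (real k - 1) * ((real N - 2) * (real N - 3)) / (((real N - 2) * (real N - 3)) * (real N * (real N - 1)))"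
          using qle N23 NNpos by (intro divide_right_mono) auto
        moreover have "(real k - 2) * (real k - 3) * (real N * (real N - 1)) / (((real N - 2) * (real N - 3)) * (real N * (real N - 1)))
           = (real k - 2) * (real k - 3) / ((real N - 2) * (real N - 3))"
          using NNpos by (intro mult_divide_mult_cancel_right) linarith
        moreover have "real k * (real k - 1) * ((real N - 2) * (real N - 3)) / (((real N - 2) * (real N - 3)) * (real N * (real N - 1)))
           = p" unfolding p_def
          apply (subst mult.commute[of "(real N - 2) * (real N - 3)"])
          using N23 by (intro mult_divide_mult_cancel_right) linarith
        ultimately have q: "(real k - 2) * (real k - 3) / ((real N - 2) * (real N - 3)) \<le> p" by simp
        have "real a0 * ((real k - 2) * (real k - 3) / ((real N - 2) * (real N - 3))) \<le> real a0 * p"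
          using q by (rule mult_left_mono) simp
        then show ?thesis by (simp only: times_divide_eq_right)
      qed
      finally show ?thesis unfolding a0p by (simp add: ac_simps)
    qed
    have perI: "real (card {X\<in>KK. i \<in> T_set S X}) \<ge> real CK / 4" if iG: "i \<in> G" for i
    proof -
      have iS: "i \<in> S" using iG GS by blast
      obtain M where gM: "good_matching (\<lambda>c. c i) {c\<in>D0. c i \<in> A i} M"
        and cM: "real (card M) > \<gamma> * real l / 2" using match[OF iG] by blast
      have glp: "\<gamma> * real l > 0" using lg by (simp add: mult.commute)
      have rp: "real (card M) * p > 1/2"
      proof -
        have "real (card M) * p * (\<gamma> * real l) \<ge> real (card M)"
          using pg by (simp add: mult.assoc mult_le_cancel_left1)
        then have "real (card M) * p * (\<gamma> * real l) > 1/2 * (\<gamma> * real l)" using cM by simp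
        then show ?thesis unfolding mult_less_cancel_right_pos[OF glp] .
      qed
      define f where "f = nat \<lfloor>1/p\<rfloor>"
      have ip: "1/p \<ge> 1" using ppos ple1 by simp
      have f1: "f \<ge> 1" unfolding f_def using ip by linarith
      have fle: "real f \<le> 1/p" unfolding f_def using ip by linarith
      have fgt: "real f > 1/p - 1" unfolding f_def using ip by linarith
      have fp: "real f * p \<le> 1" using fle ppos by (simp add: field_simps)
      have fp2: "real f * p > 1 - p" using fgt ppos by (simp add: field_simps)
      define r0 where "r0 = min (card M) f"
      have "r0 \<le> card M" unfolding r0_def by simp
      then obtain M0 where M0: "M0 \<subseteq> M" "card M0 = r0" "finite M0"
        using obtain_subset_with_card_n by metis
      have gM0: "good_matching (\<lambda>c. c i) {c\<in>D0. c i \<in> A i} M0" using gM M0(1) by (rule gm_subset)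
      define y where "y = real r0 * p"
      have y12: "y \<ge> 1/2 \<and> y \<le> 1"
      proof (cases "card M \<le> f")
        case True then have "r0 = card M" unfolding r0_def by simp
        moreover have "real (card M) * p \<le> real f * p" using True ppos by (simp add: mult_right_mono)
        ultimately show ?thesis unfolding y_def using rp fp by simp
      next
        case False then have "r0 = f" unfolding r0_def by simp
        moreover have "real f * p \<ge> p" using f1 ppos by simp
        ultimately have "y = real f * p" "real f * p \<ge> p" unfolding y_def by simp_all
        then show ?thesis using fp fp2 by linarith
      qed
      define Af where "Af e = {X. X \<subseteq> D0 \<and> card X = k \<and> e \<subseteq> X}" for e
      have eD: "e \<subseteq> D0 \<and> card e = 2" if "e \<in> M0" for e
        using gm_edge[OF gM0 that] by blast
      have cA: "\<forall>e\<in>M0. real a0 \<le> real (card (Af e))"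
      proof
        fix e assume "e \<in> M0"
        then have "e \<subseteq> D0" "card e = 2" using eD by auto
        then have "card (Af e) = (card D0 - 2) choose (k - 2)"
          unfolding Af_def using count_sup[OF D0(3), of e k] k5 by simp
        then show "real a0 \<le> real (card (Af e))" unfolding a0_def D0(2) by simp
      qed
      have cB: "\<forall>e\<in>M0. \<forall>e'\<in>M0. e \<noteq> e' \<longrightarrow> real (card (Af e \<inter> Af e')) \<le> real b0"
      proof (intro ballI impI)
        fix e e' assume ee: "e \<in> M0" "e' \<in> M0" "e \<noteq> e'"
        have d: "e \<inter> e' = {}" using gm_disj[OF gM0 ee] .
        have h1: "e \<subseteq> D0" "card e = 2" using eD ee(1) by auto
        have h2: "e' \<subseteq> D0" "card e' = 2" using eD ee(2) by auto
        have fe: "finite e" using h1(2) by (intro card_ge_0_finite) simp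
        have fe': "finite e'" using h2(2) by (intro card_ge_0_finite) simp
        have "card (e \<union> e') = card e + card e'" by (rule card_Un_disjoint[OF fe fe' d])
        then have u1: "e \<union> e' \<subseteq> D0" "card (e \<union> e') = 4" using h1 h2 by simp_all
        have "Af e \<inter> Af e' = {X. X \<subseteq> D0 \<and> card X = k \<and> e \<union> e' \<subseteq> X}" unfolding Af_def by blast
        also have "card \<dots> = (card D0 - 4) choose (k - 4)"
          using count_sup[OF D0(3) u1(1), of k] u1(2) k5 by simp
        finally show "real (card (Af e \<inter> Af e')) \<le> real b0" unfolding b0_def D0(2) by simp
      qed
      have finA: "\<forall>e\<in>M0. finite (Af e)"
      proof
        fix e show "finite (Af e)" using finKK unfolding Af_def KK_def by (rule finite_subset[rotated]) blast
      qed
      have bo: "real (card (\<Union>e\<in>M0. Af e)) \<ge> real r0 * real a0 - real r0 * (real r0 - 1) / 2 * real b0"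
        using bonf[OF M0(3) finA cA cB] M0(2) by simp
      have "real r0 * (real r0 - 1) / 2 * real b0 \<le> real r0 * real r0 / 2 * (p * p * real CK)"
      proof -
        have "real r0 * (real r0 - 1) \<le> real r0 * real r0" by (simp add: mult_left_mono)
        then have "real r0 * (real r0 - 1) / 2 \<le> real r0 * real r0 / 2" by simp
        moreover have "real r0 * (real r0 - 1) / 2 \<ge> 0" by (cases r0) auto
        ultimately show ?thesis using b0p by (intro mult_mono) auto
      qed
      moreover have "real r0 * real a0 = y * real CK" unfolding y_def a0p by simp
      moreover have "real r0 * real r0 / 2 * (p * p * real CK) = y * y / 2 * real CK"
        unfolding y_def by simp
      moreover have "(y - y * y / 2) * real CK = y * real CK - y * y / 2 * real CK"
        by (simp add: algebra_simps)
      ultimately have bo2: "real (card (\<Union>e\<in>M0. Af e)) \<ge> (y - y * y / 2) * real CK"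
        using bo by linarith
      have "(1 - y) * (1 - y) \<le> (1/2) * (1/2)" using y12 by (intro mult_mono) auto
      then have "y - y * y / 2 \<ge> 1/4" by (simp add: algebra_simps)
      then have "(y - y * y / 2) * real CK \<ge> 1/4 * real CK" by (intro mult_right_mono) auto
      then have bo3: "real (card (\<Union>e\<in>M0. Af e)) \<ge> real CK / 4" using bo2 by simp
      have "(\<Union>e\<in>M0. Af e) \<subseteq> {X\<in>KK. i \<in> T_set S X}"
      proof
        fix X assume "X \<in> (\<Union>e\<in>M0. Af e)"
        then obtain e where eM: "e \<in> M0" and XA: "X \<in> Af e" by blast
        note ee = gm_edge[OF gM0 eM]
        have "X \<in> KK" "e \<subseteq> X" using XA unfolding Af_def KK_def by auto
        moreover have "i \<in> T_set S X" using iS \<open>e \<subseteq> X\<close> ee by (intro edge_T[of i S e X]) auto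
        ultimately show "X \<in> {X\<in>KK. i \<in> T_set S X}" by blast
      qed
      then have "card (\<Union>e\<in>M0. Af e) \<le> card {X\<in>KK. i \<in> T_set S X}"
        using finKK by (intro card_mono) auto
      then show ?thesis using bo3 by linarith
    qed
    have swap: "(\<Sum>X\<in>KK. card {i\<in>G. i \<in> T_set S X}) = (\<Sum>i\<in>G. card {X\<in>KK. i \<in> T_set S X})"
      by (rule count_swap[OF finKK finG])
    have sumT: "(\<Sum>X\<in>KK. real (card {i\<in>G. i \<in> T_set S X})) \<ge> real (card G) * (real CK / 4)"
    proof -
      have "(\<Sum>X\<in>KK. real (card {i\<in>G. i \<in> T_set S X})) = real (\<Sum>X\<in>KK. card {i\<in>G. i \<in> T_set S X})"
        by (simp only: of_nat_sum)
      also have "\<dots> = real (\<Sum>i\<in>G. card {X\<in>KK. i \<in> T_set S X})" by (simp only: swap)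
      also have "\<dots> = (\<Sum>i\<in>G. real (card {X\<in>KK. i \<in> T_set S X}))" by (simp only: of_nat_sum)
      also have "\<dots> \<ge> (\<Sum>i\<in>G. real CK / 4)" using perI by (intro sum_mono) auto
      finally show ?thesis by simp
    qed
    obtain X where XK: "X \<in> KK" and Xb: "real (card {i\<in>G. i \<in> T_set S X}) \<ge> real (card G) / 4"
    proof (rule ccontr)
      assume "\<not> thesis"
      then have lt: "\<forall>X\<in>KK. real (card {i\<in>G. i \<in> T_set S X}) < real (card G) / 4" using that by force
      have "(\<Sum>X\<in>KK. real (card {i\<in>G. i \<in> T_set S X})) < (\<Sum>X\<in>KK. real (card G) / 4)"
        using finKK KKne lt by (intro sum_strict_mono) auto
      also have "\<dots> = real CK * (real (card G) / 4)" using cKK by simp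
      finally show False using sumT by (simp add: algebra_simps)
    qed
    have "card {i\<in>G. i \<in> T_set S X} \<le> card (T_set S X)" using Tfin by (intro card_mono) auto
    then have "real (card (T_set S X)) \<ge> \<sigma> * real m / 4" using Xb Gbig by linarith
    moreover have "X \<subseteq> puncture C S" using XK DP unfolding KK_def by blast
    moreover have "real (card X) \<le> 10 * sqrt (real l / \<gamma>)" using XK kc unfolding KK_def by simp
    ultimately show ?thesis by blast
  qed
qed

end
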